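(* The lattice width of a Delzant polytope $\Delta\subseteq\mathbb{R}^d$ coincides with its facet width.
   Context: A Delzant polytope is a full-dimensional polytope $\Delta\subseteq\mathbb{R}^d$ whose normal fan consists of unimodular cones, i.e. at each vertex the primitive inner normals of the incident facets form a basis of $(\mathbb{Z}^d)^*$. For $u\ne0$, $\mathrm{width}_u(\Delta)=\max_{x,y\in\Delta}|u(x)-u(y)|$. The lattice width is $\min_{u\in(\mathbb{Z}^d)^*\setminus\{0\}}\mathrm{width}_u(\Delta)$; the facet width is the minimum of $\mathrm{width}_u(\Delta)$ over the primitive facet normals $u\in(\mathbb{Z}^d)^*$ of $\Delta$. *)

theory Defs
  imports "HOL-Analysis.Analysis"
begin

text \<open>Lattice functionals: elements of the dual lattice, represented by integer
  coefficient vectors u, acting on real^'d by u(x) = sum_i u_i x_i.\<close>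

definition lfun :: "int ^ 'd \<Rightarrow> real ^ 'd \<Rightarrow> real" where
  "lfun u x = (\<Sum>i\<in>UNIV. real_of_int (u $ i) * x $ i)"

definition primitive :: "int ^ 'd \<Rightarrow> bool" where
  "primitive u \<longleftrightarrow> u \<noteq> 0 \<and> (\<forall>k::int. (\<forall>i. k dvd u $ i) \<longrightarrow> \<bar>k\<bar> = 1)"

definition primitive_inner_normal :: "(real ^ 'd) set \<Rightarrow> (real ^ 'd) set \<Rightarrow> int ^ 'd \<Rightarrow> bool" where
  "primitive_inner_normal P F u \<longleftrightarrow>
     primitive u \<and> F = {x \<in> P. \<forall>y\<in>P. lfun u x \<le> lfun u y}"

definition incident_normals :: "(real ^ 'd) set \<Rightarrow> real ^ 'd \<Rightarrow> (int ^ 'd) set" where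
  "incident_normals P v = {u. \<exists>F. F facet_of P \<and> v \<in> F \<and> primitive_inner_normal P F u}"

definition delzant :: "(real ^ 'd) set \<Rightarrow> bool" where
  "delzant P \<longleftrightarrow> polytope P \<and> interior P \<noteq> {} \<and>
     (\<forall>F. F facet_of P \<longrightarrow> (\<exists>u. primitive_inner_normal P F u)) \<and>
     (\<forall>v. v extreme_point_of P \<longrightarrow>
        (\<exists>b :: 'd \<Rightarrow> int ^ 'd. bij_betw b UNIV (incident_normals P v) \<and>
            \<bar>det (\<chi> i j. b i $ j)\<bar> = 1))"

definition width_dir :: "int ^ 'd \<Rightarrow> (real ^ 'd) set \<Rightarrow> real" where
  "width_dir u P = (SUP xy\<in>P \<times> P. \<bar>lfun u (fst xy) - lfun u (snd xy)\<bar>)"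

definition lattice_width :: "(real ^ 'd) set \<Rightarrow> real" where
  "lattice_width P = (INF u\<in>{u::int ^ 'd. u \<noteq> 0}. width_dir u P)"

definition facet_width :: "(real ^ 'd) set \<Rightarrow> real" where
  "facet_width P = (INF u\<in>{u. \<exists>F. F facet_of P \<and> primitive_inner_normal P F u}. width_dir u P)"

end

theory Submission imports Defs begin

lemma facet_normal_sign:
  fixes P :: "(real^'d) set"
  assumes int: "interior P \<noteq> {}"
    and fac: "G facet_of P" and Geq: "G = P \<inter> {x. a \<bullet> x = c}" and Psub: "P \<subseteq> {x. a \<bullet> x \<le> c}" and a0: "a \<noteq> 0"
    and Gmin: "G = {x\<in>P. \<forall>y\<in>P. w \<bullet> x \<le> w \<bullet> y}" and gG: "g \<in> G" and wx: "w \<bullet> g \<le> w \<bullet> x"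
  shows "a \<bullet> x \<le> c"
proof -
  have adG: "aff_dim G = int DIM(real^'d) - 1"
    using fac int aff_dim_nonempty_interior[OF int] by (simp add: facet_of_def)
  have sub: "affine hull G \<subseteq> {x. a \<bullet> x = c}"
    by (rule hull_minimal) (use Geq affine_hyperplane in auto)
  have ahG: "affine hull G = {x. a \<bullet> x = c}"
    apply (rule affine_dim_equal)
    using gG sub adG a0 affine_hyperplane by (auto simp: hull_inc)
  have sub2: "affine hull G \<subseteq> {x. w \<bullet> x = w \<bullet> g}"
  proof (rule hull_minimal)
    show "G \<subseteq> {x. w \<bullet> x = w \<bullet> g}"
    proof
      fix y assume "y \<in> G"
      then show "y \<in> {x. w \<bullet> x = w \<bullet> g}" using gG Gmin by (auto intro: order.antisym)
    qed
  qed (rule affine_hyperplane)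
  have ag: "a \<bullet> g = c" using gG Geq by auto
  have perp: "w \<bullet> z = 0" if "a \<bullet> z = 0" for z
  proof -
    have "g + z \<in> affine hull G" using ahG ag that by (simp add: inner_add_right)
    then have "w \<bullet> (g + z) = w \<bullet> g" using sub2 by auto
    then show ?thesis by (simp add: inner_add_right)
  qed
  define l where "l = (w \<bullet> a) / (a \<bullet> a)"
  have aa: "a \<bullet> a > 0" using a0 by simp
  have az: "a \<bullet> (w - l *\<^sub>R a) = 0"
    using aa by (simp add: l_def inner_diff_right inner_commute)
  have wz: "w \<bullet> (w - l *\<^sub>R a) = 0" using perp[OF az] .
  have "(w - l *\<^sub>R a) \<bullet> (w - l *\<^sub>R a) = 0"
    using az wz by (simp add: inner_diff_left inner_commute)
  then have wl: "w = l *\<^sub>R a" by simp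
  obtain p where p: "p \<in> interior P" using int by auto
  then obtain e where e: "e > 0" "ball p e \<subseteq> P" using mem_interior by blast
  define q where "q = p + (e / 2 / norm a) *\<^sub>R a"
  have "dist p q < e" using e a0 by (simp add: q_def dist_norm)
  then have "q \<in> P" using e by auto
  then have "a \<bullet> q \<le> c" using Psub by auto
  moreover have "a \<bullet> q = a \<bullet> p + (e / 2 / norm a) * (a \<bullet> a)"
    by (simp add: q_def inner_add_right)
  moreover have "(e / 2 / norm a) * (a \<bullet> a) > 0" using e aa a0 by simp
  ultimately have apc: "a \<bullet> p < c" by linarith
  have "p \<in> P" using p interior_subset by auto
  then have "w \<bullet> g \<le> w \<bullet> p" using gG Gmin by auto
  then have "l * c \<le> l * (a \<bullet> p)" using wl ag by simp
  then have l0: "l \<le> 0" using apc by (smt (verit) mult_le_cancel_left)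
  have "l \<noteq> 0"
  proof
    assume "l = 0"
    then have "w = 0" using wl by simp
    then have "G = P" using Gmin by auto
    then show False using fac by simp
  qed
  with l0 have "l < 0" by simp
  with wx wl ag show ?thesis by (simp add: mult_le_cancel_left)
qed

definition rv :: "int ^ 'd \<Rightarrow> real ^ 'd" where
  "rv u = (\<chi> i. real_of_int (u $ i))"

lemma lfun_rv: "lfun u x = rv u \<bullet> x"
  by (simp add: lfun_def rv_def inner_vec_def)

lemma vertex_dir:
  fixes P :: "(real^'d) set"
  assumes D: "delzant P" and v: "v extreme_point_of P"
    and e: "\<And>w. w \<in> incident_normals P v \<Longrightarrow> rv w \<bullet> e \<ge> 0"
  shows "\<exists>t>0. v + t *\<^sub>R e \<in> P"
proof -
  have poly: "polytope P" and int: "interior P \<noteq> {}"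
    and facn: "\<And>G. G facet_of P \<Longrightarrow> \<exists>u. primitive_inner_normal P G u"
    using D by (auto simp: delzant_def)
  have ph: "polyhedron P" using poly by (rule polytope_imp_polyhedron)
  have vP: "v \<in> P" using v by (simp add: extreme_point_of_def)
  obtain F where "finite F" and seq: "P = affine hull P \<inter> \<Inter>F"
             and faces: "\<And>h. h \<in> F \<Longrightarrow> \<exists>a b. a \<noteq> 0 \<and> h = {x. a \<bullet> x \<le> b}"
             and min: "\<And>F'. F' \<subset> F \<Longrightarrow> P \<subset> (affine hull P) \<inter> \<Inter>F'"
    using ph by (simp add: polyhedron_Int_affine_minimal) meson
  then obtain ah bh where ab: "\<And>h. h \<in> F \<Longrightarrow> ah h \<noteq> 0 \<and> h = {x. ah h \<bullet> x \<le> bh h}"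
    by metis
  note facex = facet_of_polyhedron_explicit [OF \<open>finite F\<close> seq ab min]
  have PF: "P = \<Inter>F" using seq affine_hull_nonempty_interior[OF int] by simp
  have Psub: "P \<subseteq> {x. ah h \<bullet> x \<le> bh h}" if "h \<in> F" for h
    using PF that ab by blast
  have tight: "ah h \<bullet> (v + t *\<^sub>R e) \<le> bh h"
    if h: "h \<in> F" and hv: "ah h \<bullet> v = bh h" and t: "t \<ge> 0" for h t
  proof -
    define G where "G = P \<inter> {x. ah h \<bullet> x = bh h}"
    have fG: "G facet_of P" using facex h G_def by blast
    obtain w where w: "primitive_inner_normal P G w" using facn[OF fG] by blast
    have vG: "v \<in> G" using vP hv G_def by simp
    have winc: "w \<in> incident_normals P v"
      using fG vG w by (auto simp: incident_normals_def)
    have Gmin: "G = {x\<in>P. \<forall>y\<in>P. rv w \<bullet> x \<le> rv w \<bullet> y}"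
      using w by (simp add: primitive_inner_normal_def lfun_rv)
    have "rv w \<bullet> v \<le> rv w \<bullet> (v + t *\<^sub>R e)"
      using e[OF winc] t by (simp add: inner_add_right)
    then show ?thesis
      using facet_normal_sign[OF int fG G_def Psub[OF h] conjunct1[OF ab[OF h]] Gmin vG] by blast
  qed
  define S where "S = {h\<in>F. ah h \<bullet> v < bh h}"
  define tf where "tf h = (if ah h \<bullet> e \<le> 0 then 1 else (bh h - ah h \<bullet> v) / (ah h \<bullet> e))" for h
  define t where "t = Min (insert 1 (tf ` S))"
  have fS: "finite S" using \<open>finite F\<close> S_def by simp
  have tfpos: "tf h > 0" if "h \<in> S" for h
    using that by (auto simp: S_def tf_def)
  have tpos: "t > 0" unfolding t_def using fS tfpos by (simp add: Min_gr_iff)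
  have tle: "t \<le> tf h" if "h \<in> S" for h
    unfolding t_def using fS that by (simp add: Min_le_iff)
  have "v + t *\<^sub>R e \<in> h" if h: "h \<in> F" for h
  proof -
    have le: "ah h \<bullet> v \<le> bh h" using Psub[OF h] vP by auto
    have "ah h \<bullet> (v + t *\<^sub>R e) \<le> bh h"
    proof (cases "ah h \<bullet> v = bh h")
      case True then show ?thesis using tight h tpos by simp
    next
      case False
      then have hS: "h \<in> S" using le h S_def by simp
      have tt: "t \<le> tf h" using tle[OF hS] .
      show ?thesis
      proof (cases "ah h \<bullet> e \<le> 0")
        case True
        then have "t * (ah h \<bullet> e) \<le> 0" using tpos by (simp add: mult_nonneg_nonpos)
        then show ?thesis using le by (simp add: inner_add_right)
      next
        case False
        then have "t \<le> (bh h - ah h \<bullet> v) / (ah h \<bullet> e)" using tt by (simp add: tf_def)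
        then have "t * (ah h \<bullet> e) \<le> bh h - ah h \<bullet> v" using False by (simp add: le_divide_eq)
        then show ?thesis by (simp add: inner_add_right)
      qed
    qed
    then show ?thesis by (subst conjunct2[OF ab[OF h]]) simp
  qed
  then have "v + t *\<^sub>R e \<in> P" using PF by blast
  with tpos show ?thesis by blast
qed

lemma det_of_int_real: "det (\<chi> i j. (of_int (M$i$j) :: real)) = of_int (det M)"
  by (simp add: det_def of_int_sum of_int_mult of_int_prod)

lemma key:
  fixes P :: "(real^'d) set" and u :: "int^'d"
  assumes D: "delzant P" and u0: "u \<noteq> 0"
  shows "\<exists>w v G. G facet_of P \<and> primitive_inner_normal P G w \<and> v \<in> P \<and>
           (\<forall>x\<in>P. \<forall>y\<in>P. lfun w x - lfun w y \<le> lfun u x - lfun u v)"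
proof -
  have poly: "polytope P" and int: "interior P \<noteq> {}"
    and vert: "\<And>v. v extreme_point_of P \<Longrightarrow> (\<exists>b :: 'd \<Rightarrow> int ^ 'd. bij_betw b UNIV (incident_normals P v) \<and>
            \<bar>det (\<chi> i j. b i $ j)\<bar> = 1)"
    using D by (auto simp: delzant_def)
  have cP: "compact P" and cvP: "convex P" using poly by (auto simp: polytope_imp_compact polytope_imp_convex)
  have ne: "P \<noteq> {}" using int interior_subset by blast
  have "continuous_on P (\<lambda>x. rv u \<bullet> x)" by (intro continuous_intros)
  then obtain m where mP: "m \<in> P" and mmin: "\<forall>y\<in>P. rv u \<bullet> m \<le> rv u \<bullet> y"
    using continuous_attains_inf[OF cP ne, of "\<lambda>x. rv u \<bullet> x"] by auto
  define E where "E = P \<inter> {x. rv u \<bullet> x = rv u \<bullet> m}"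
  have fE: "E face_of P" unfolding E_def
    by (rule face_of_Int_supporting_hyperplane_ge) (use cvP mmin in auto)
  have cE: "compact E" unfolding E_def
    by (rule compact_Int_closed[OF cP]) (auto intro: closed_hyperplane)
  have nE: "E \<noteq> {}" using mP E_def by auto
  obtain v where vE: "v extreme_point_of E"
    using extreme_point_exists_convex[OF cE face_of_imp_convex[OF fE] nE] by blast
  have vP: "v extreme_point_of P" and "v \<in> E" using vE extreme_point_of_face[OF fE] by auto
  then have vin: "v \<in> P" and vmin: "\<And>y. y \<in> P \<Longrightarrow> rv u \<bullet> v \<le> rv u \<bullet> y"
    using mmin E_def by auto
  obtain b :: "'d \<Rightarrow> int^'d" where bb: "bij_betw b UNIV (incident_normals P v)"
    and bdet: "\<bar>det (\<chi> i j. b i $ j)\<bar> = 1" using vert[OF vP] by blast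
  define R :: "real^'d^'d" where "R = (\<chi> i j. of_int ((\<chi> i j. b i $ j) $ i $ j))"
  have detR: "det R = of_int (det (\<chi> i j. b i $ j))" unfolding R_def by (rule det_of_int_real)
  have detR0: "det R \<noteq> 0" using detR bdet by auto
  have Rv: "(R *v y) $ i = rv (b i) \<bullet> y" for y i
    by (simp add: R_def matrix_vector_mult_def rv_def inner_vec_def)
  have binc: "b i \<in> incident_normals P v" for i using bb by (auto simp: bij_betw_def)
  have incb: "\<exists>i. w = b i" if "w \<in> incident_normals P v" for w
    using bb that by (auto simp: bij_betw_def)
  have bmin: "rv (b i) \<bullet> v \<le> rv (b i) \<bullet> y" if "y \<in> P" for i y
  proof -
    obtain F where F: "F facet_of P" "v \<in> F" "primitive_inner_normal P F (b i)"
      using binc[of i] by (auto simp: incident_normals_def)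
    then show ?thesis using that by (auto simp: primitive_inner_normal_def lfun_rv)
  qed
  define a :: "real^'d" where "a = (\<chi> k. det(\<chi> i j. if j=k then rv u $ i else transpose R $ i $ j) / det (transpose R))"
  have aeq: "transpose R *v a = rv u"
    using cramer[of "transpose R" a "rv u"] detR0 by (simp add: det_transpose a_def)
  have uy: "rv u \<bullet> y = a \<bullet> (R *v y)" for y
    by (metis aeq dot_lmul_matrix transpose_matrix_vector)
  have aint: "\<exists>n::int. a $ k = of_int n" for k
  proof -
    define Mk :: "int^'d^'d" where "Mk = (\<chi> i j. if j = k then u $ i else b j $ i)"
    have "(\<chi> i j. if j=k then rv u $ i else transpose R $ i $ j) = (\<chi> i j. (of_int (Mk $ i $ j) :: real))"
      by (simp add: Mk_def R_def rv_def transpose_def vec_eq_iff)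
    then have "a $ k = of_int (det Mk) / of_int (det (\<chi> i j. b i $ j))"
      by (simp add: a_def det_transpose detR det_of_int_real)
    moreover have "det (\<chi> i j. b i $ j) = 1 \<or> det (\<chi> i j. b i $ j) = -1" using bdet by linarith
    ultimately show ?thesis by (metis div_by_1 divide_minus_right of_int_1 of_int_minus)
  qed
  have anonneg: "a $ k \<ge> 0" for k
  proof -
    define ek :: "real^'d" where "ek = (\<chi> k'. det(\<chi> i j. if j=k' then axis k 1 $ i else R $ i $ j) / det R)"
    have Rek: "R *v ek = axis k 1" using cramer[of R ek "axis k 1"] detR0 by (simp add: ek_def)
    have "rv w \<bullet> ek \<ge> 0" if wi: "w \<in> incident_normals P v" for w
    proof -
      obtain i where "w = b i" using incb[OF wi] by blast
      then have "rv w \<bullet> ek = (R *v ek) $ i" by (simp add: Rv)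
      then show ?thesis by (simp add: Rek axis_def)
    qed
    then obtain t where t: "t > 0" "v + t *\<^sub>R ek \<in> P" using vertex_dir[OF D vP] by blast
    then have "rv u \<bullet> v \<le> rv u \<bullet> (v + t *\<^sub>R ek)" using vmin by blast
    then have "0 \<le> t * (rv u \<bullet> ek)" by (simp add: inner_add_right)
    then have "0 \<le> rv u \<bullet> ek" using t by (simp add: zero_le_mult_iff)
    moreover have "rv u \<bullet> ek = a $ k" using uy[of ek] Rek by (simp add: inner_axis)
    ultimately show ?thesis by simp
  qed
  have "rv u \<noteq> 0" using u0 by (simp add: rv_def vec_eq_iff)
  then have "a \<noteq> 0" using aeq by auto
  then obtain j where "a $ j \<noteq> 0" by (auto simp: vec_eq_iff)
  moreover obtain n :: int where n: "a $ j = of_int n" using aint[of j] by blast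
  ultimately have "n \<noteq> 0" "n \<ge> 0" using anonneg[of j] by auto
  then have aj: "a $ j \<ge> 1" using n by simp
  obtain G where G: "G facet_of P" "v \<in> G" "primitive_inner_normal P G (b j)"
    using binc[of j] by (auto simp: incident_normals_def)
  have "lfun (b j) x - lfun (b j) y \<le> lfun u x - lfun u v" if x: "x \<in> P" and y: "y \<in> P" for x y
  proof -
    have ynn: "(R *v (x - v)) $ i \<ge> 0" for i using bmin[OF x] by (simp add: Rv inner_diff_right)
    have "lfun u x - lfun u v = a \<bullet> (R *v (x - v))" by (simp add: lfun_rv uy[symmetric] inner_diff_right)
    also have "\<dots> = (\<Sum>i\<in>UNIV. a $ i * (R *v (x - v)) $ i)" by (simp add: inner_vec_def)
    also have "\<dots> \<ge> a $ j * (R *v (x - v)) $ j"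
      by (rule member_le_sum) (auto intro: mult_nonneg_nonneg anonneg ynn)
    finally have 1: "a $ j * (R *v (x - v)) $ j \<le> lfun u x - lfun u v" .
    have "(R *v (x - v)) $ j \<le> a $ j * (R *v (x - v)) $ j"
      using aj ynn[of j] by (simp add: mult_le_cancel_right1)
    moreover have "lfun (b j) x - lfun (b j) y \<le> (R *v (x - v)) $ j"
      using bmin[OF y, of j] by (simp add: Rv lfun_rv inner_diff_right)
    ultimately show ?thesis using 1 by linarith
  qed
  then show ?thesis using G vin by blast
qed

lemma wd_bdd:
  fixes P :: "(real^'d) set"
  assumes "bounded P"
  shows "bdd_above ((\<lambda>xy. \<bar>lfun u (fst xy) - lfun u (snd xy)\<bar>) ` (P \<times> P))"
proof -
  obtain B where B: "\<And>x. x \<in> P \<Longrightarrow> norm x \<le> B" using assms bounded_iff by blast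
  have "\<bar>lfun u x - lfun u y\<bar> \<le> norm (rv u) * (B + B)" if "x \<in> P" "y \<in> P" for x y
  proof -
    have "\<bar>lfun u x - lfun u y\<bar> = \<bar>rv u \<bullet> (x - y)\<bar>" by (simp add: lfun_rv inner_diff_right)
    also have "\<dots> \<le> norm (rv u) * norm (x - y)" by (rule Cauchy_Schwarz_ineq2)
    also have "\<dots> \<le> norm (rv u) * (B + B)"
      using B[OF that(1)] B[OF that(2)] norm_triangle_ineq4[of x y]
      by (intro mult_left_mono) auto
    finally show ?thesis .
  qed
  then show ?thesis by (intro bdd_aboveI[where M="norm (rv u) * (B + B)"]) auto
qed

lemma wd_upper:
  fixes P :: "(real^'d) set"
  assumes "bounded P" "x \<in> P" "y \<in> P"
  shows "\<bar>lfun u x - lfun u y\<bar> \<le> width_dir u P"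
  unfolding width_dir_def
  using cSUP_upper[OF _ wd_bdd[OF assms(1)], of "(x,y)" u] assms by auto

lemma wd_least:
  fixes P :: "(real^'d) set"
  assumes "P \<noteq> {}" "\<And>x y. x \<in> P \<Longrightarrow> y \<in> P \<Longrightarrow> \<bar>lfun u x - lfun u y\<bar> \<le> c"
  shows "width_dir u P \<le> c"
  unfolding width_dir_def
  by (rule cSUP_least) (use assms in auto)

theorem lemma3p9:
  fixes P :: "(real ^ 'd) set"
  assumes "delzant P"
  shows "lattice_width P = facet_width P"
proof -
  have poly: "polytope P" and int: "interior P \<noteq> {}" using assms by (auto simp: delzant_def)
  have bP: "bounded P" using poly by (simp add: polytope_imp_bounded)
  have ne: "P \<noteq> {}" using int interior_subset by blast
  obtain p where pP: "p \<in> P" using ne by blast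
  define A where "A = {u::int ^ 'd. u \<noteq> 0}"
  define B where "B = {u. \<exists>F. F facet_of P \<and> primitive_inner_normal P F u}"
  have wnn: "0 \<le> width_dir u P" for u
    using wd_upper[OF bP pP pP, of u] by simp
  have bdA: "bdd_below ((\<lambda>u. width_dir u P) ` A)" by (rule bdd_belowI[where m=0]) (auto simp: wnn)
  have bdB: "bdd_below ((\<lambda>u. width_dir u P) ` B)" by (rule bdd_belowI[where m=0]) (auto simp: wnn)
  have BA: "B \<subseteq> A" by (auto simp: A_def B_def primitive_inner_normal_def primitive_def)
  have cl: "\<exists>w\<in>B. width_dir w P \<le> width_dir u P" if uA: "u \<in> A" for u
  proof -
    obtain w v G where G: "G facet_of P" "primitive_inner_normal P G w" "v \<in> P"
      and H: "\<forall>x\<in>P. \<forall>y\<in>P. lfun w x - lfun w y \<le> lfun u x - lfun u v"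
      using key[OF assms, of u] uA A_def by blast
    have "width_dir w P \<le> width_dir u P"
    proof (rule wd_least[OF ne])
      fix x y assume x: "x \<in> P" and y: "y \<in> P"
      have "lfun w x - lfun w y \<le> width_dir u P"
        using H x y wd_upper[OF bP x \<open>v \<in> P\<close>, of u] by force
      moreover have "lfun w y - lfun w x \<le> width_dir u P"
        using H x y wd_upper[OF bP y \<open>v \<in> P\<close>, of u] by force
      ultimately show "\<bar>lfun w x - lfun w y\<bar> \<le> width_dir u P" by linarith
    qed
    then show ?thesis using G B_def by blast
  qed
  have "axis undefined 1 \<in> A" by (simp add: A_def axis_def vec_eq_iff)
  then have Ane: "A \<noteq> {}" by blast
  then have Bne: "B \<noteq> {}" using cl by blast
  have 1: "lattice_width P \<le> facet_width P"
    unfolding lattice_width_def facet_width_def A_def[symmetric] B_def[symmetric]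
    by (rule cINF_superset_mono[OF Bne bdA BA]) simp
  have 2: "facet_width P \<le> lattice_width P"
    unfolding lattice_width_def facet_width_def A_def[symmetric] B_def[symmetric]
  proof (rule cINF_greatest[OF Ane])
    fix u assume "u \<in> A"
    then obtain w where "w \<in> B" "width_dir w P \<le> width_dir u P" using cl by blast
    then show "(INF u\<in>B. width_dir u P) \<le> width_dir u P"
      using cINF_lower[OF bdB] by (meson order_trans)
  qed
  show ?thesis using 1 2 by simp
qed
end
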